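(* Let $\mathbb{F}$ be a field and $\mathcal{C}_2 \subsetneqq \mathcal{C}_1 \subseteq \mathbb{F}^{m \times n}$ linear codes with $\ell = \dim(\mathcal{C}_1) - \dim(\mathcal{C}_2)$. Then $$0 \leq d_{M,r+1}(\mathcal{C}_1,\mathcal{C}_2) - d_{M,r}(\mathcal{C}_1,\mathcal{C}_2) \leq \min\{m,n\} \quad \text{for } 1 \leq r \leq \ell - 1,$$ and $$d_{M,r}(\mathcal{C}_1,\mathcal{C}_2) + 1 \leq d_{M,r+m}(\mathcal{C}_1,\mathcal{C}_2) \quad \text{for } 1 \leq r \leq \ell - m.$$
   Context: ${\rm Row}(V)$ is the row space. For a subspace $\mathcal{L} \subseteq \mathbb{F}^n$, $\mathcal{V}_\mathcal{L} = \{V \in \mathbb{F}^{m\times n} \mid {\rm Row}(V) \subseteq \mathcal{L}\}$, and $d_{M,r}(\mathcal{C}_1,\mathcal{C}_2) = \min\{\dim \mathcal{L} \mid \mathcal{L}\subseteq\mathbb{F}^n, \dim(\mathcal{C}_1 \cap \mathcal{V}_\mathcal{L}) - \dim(\mathcal{C}_2 \cap \mathcal{V}_\mathcal{L}) \geq r\}$. *)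

theory Defs
  imports "HOL-Analysis.Analysis"
begin

text \<open>Vectors of F^n are elements of type 'a^'n (n = CARD('n));
  m x n matrices are elements of type 'a^'n^'m (rows indexed by 'm).\<close>

definition mscale :: "'a::field \<Rightarrow> 'a^'n^'m \<Rightarrow> 'a^'n^'m" where
  "mscale c A = (\<chi> i. c *s (A $ i))"

lemma mscale_vector_space: "vector_space (mscale :: 'a::field \<Rightarrow> 'a^'n^'m \<Rightarrow> 'a^'n^'m)"
  by unfold_locales (auto simp: mscale_def vec_eq_iff field_simps)

definition lin_code :: "('a::field^'n^'m) set \<Rightarrow> bool" where
  "lin_code C = module.subspace mscale C"

definition mdim :: "('a::field^'n^'m) set \<Rightarrow> nat" where
  "mdim C = vector_space.dim mscale C"

definition Row :: "'a::field^'n^'m \<Rightarrow> ('a^'n) set" where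
  "Row V = vec.span (range (\<lambda>i. V $ i))"

definition VL :: "('a::field^'n) set \<Rightarrow> ('a^'n^'m) set" where
  "VL L = {V. Row V \<subseteq> L}"

definition dMr :: "('a::field^'n^'m) set \<Rightarrow> ('a^'n^'m) set \<Rightarrow> nat \<Rightarrow> nat" where
  "dMr C1 C2 r = (LEAST d. \<exists>L. vec.subspace L \<and> vec.dim L = d \<and>
      int (mdim (C1 \<inter> VL L)) - int (mdim (C2 \<inter> VL L)) \<ge> int r)"

end

theory Submission
  imports Defs
begin

context finite_dimensional_vector_space begin
lemma dim_Un_card: "finite T \<Longrightarrow> dim (S \<union> T) \<le> dim S + card T"
proof (induction T rule: finite_induct)
  case empty then show ?case by simp
next
  case (insert x F)
  have "dim (S \<union> insert x F) = dim (insert x (S \<union> F))" by simp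
  also have "\<dots> \<le> dim (S \<union> F) + 1" by (simp add: dim_insert)
  finally show ?case using insert by simp
qed

lemma dim_diff_formula:
  assumes "subspace A" "subspace B"
  shows "int (dim A) - int (dim (A \<inter> B)) = int (dim (A \<union> B)) - int (dim B)"
proof -
  have "span (A \<union> B) = {x + y |x y. x \<in> A \<and> y \<in> B}"
    using span_Un[of A B] assms(1,2)[folded span_eq_iff] by simp
  then have "dim (A \<union> B) = dim {x + y |x y. x \<in> A \<and> y \<in> B}"
    by (metis dim_span)
  with dim_sums_Int[OF assms] show ?thesis by linarith
qed
end


definition Eij :: "'m \<Rightarrow> 'n \<Rightarrow> 'a::field^'n^'m" where
  "Eij i j = (\<chi> a b. if a = i \<and> b = j then 1 else 0)"

lemma mspan_UNIV: "module.span mscale (range (\<lambda>(i,j). Eij i j)) = (UNIV :: ('a::field^'n^'m) set)"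
proof -
  interpret V: vector_space "mscale :: 'a \<Rightarrow> 'a^'n^'m \<Rightarrow> _" by (rule mscale_vector_space)
  have "A \<in> V.span (range (\<lambda>(i,j). Eij i j))" for A :: "'a^'n^'m"
  proof -
    have comp: "(\<Sum>p\<in>UNIV. mscale (A $ fst p $ snd p) (Eij (fst p) (snd p))) $ a $ b = A $ a $ b"
      for a b
    proof -
      have "(\<Sum>p\<in>UNIV. mscale (A $ fst p $ snd p) (Eij (fst p) (snd p))) $ a $ b
          = (\<Sum>p\<in>UNIV. (mscale (A $ fst p $ snd p) (Eij (fst p) (snd p))) $ a $ b)"
        by (simp only: sum_component)
      also have "\<dots> = (\<Sum>p\<in>UNIV. if p = (a, b) then A $ a $ b else 0)"
        by (rule sum.cong[OF refl]) (auto simp: mscale_def Eij_def)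
      also have "\<dots> = A $ a $ b" by simp
      finally show ?thesis .
    qed
    have eq: "A = (\<Sum>p\<in>UNIV. mscale (A $ fst p $ snd p) (Eij (fst p) (snd p)))"
      by (simp only: vec_eq_iff comp) simp
    show ?thesis
      by (subst eq, intro V.span_sum V.span_scale V.span_base) (auto simp: case_prod_beta)
  qed
  then show ?thesis by auto
qed

lemma mfd_ex: "\<exists>B. finite_dimensional_vector_space (mscale :: 'a::field \<Rightarrow> 'a^'n^'m \<Rightarrow> _) B"
proof -
  interpret V: vector_space "mscale :: 'a \<Rightarrow> 'a^'n^'m \<Rightarrow> _" by (rule mscale_vector_space)
  obtain B where B: "B \<subseteq> range (\<lambda>(i,j). Eij i j)" "V.independent B" "range (\<lambda>(i,j). Eij i j) \<subseteq> V.span B"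
    using V.maximal_independent_subset by blast
  have "finite B" using B(1) by (rule finite_subset) simp
  moreover have "V.span B = UNIV"
    using V.span_mono[OF B(3)] mspan_UNIV[where 'a='a and 'n='n and 'm='m] by (simp add: V.span_span) blast
  ultimately show ?thesis using B(2) mscale_vector_space
    by (auto simp: finite_dimensional_vector_space_def finite_dimensional_vector_space_axioms_def)
qed

definition MB :: "('a::field^'n^'m) set" where
  "MB = (SOME B. finite_dimensional_vector_space mscale B)"

interpretation M: finite_dimensional_vector_space "mscale :: 'a::field \<Rightarrow> 'a^'n^'m \<Rightarrow> _" MB
  unfolding MB_def by (rule someI_ex[OF mfd_ex])


lemma Row_sub_iff: "vec.subspace L \<Longrightarrow> Row V \<subseteq> L \<longleftrightarrow> (\<forall>i. V $ i \<in> L)"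
  unfolding Row_def
proof
  assume "vec.span (range (($) V)) \<subseteq> L"
  then show "\<forall>i. V $ i \<in> L" using vec.span_base[of _ "range (($) V)"] by blast
next
  assume "vec.subspace L" "\<forall>i. V $ i \<in> L"
  then show "vec.span (range (($) V)) \<subseteq> L" by (intro vec.span_minimal) auto
qed

lemma VL_iff: "vec.subspace L \<Longrightarrow> V \<in> VL L \<longleftrightarrow> (\<forall>i. V $ i \<in> L)"
  by (simp add: VL_def Row_sub_iff)

lemma VL_mono: "L \<subseteq> L' \<Longrightarrow> VL L \<subseteq> VL L'"
  by (auto simp: VL_def)

lemma VL_UNIV: "VL UNIV = UNIV" by (simp add: VL_def)

lemma VL_subspace: "vec.subspace L \<Longrightarrow> M.subspace (VL L)"
  unfolding M.subspace_def
  by (auto simp: VL_iff mscale_def vec.subspace_0 vec.subspace_add vec.subspace_scale)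

definition Dv :: "('a::field^'n^'m) set \<Rightarrow> ('a^'n^'m) set \<Rightarrow> ('a^'n) set \<Rightarrow> int" where
  "Dv C1 C2 L = int (mdim (C1 \<inter> VL L)) - int (mdim (C2 \<inter> VL L))"

lemma Dv_alt:
  assumes "lin_code C1" "lin_code C2" "C2 \<subseteq> C1" "vec.subspace L"
  shows "Dv C1 C2 L = int (M.dim ((C1 \<inter> VL L) \<union> C2)) - int (M.dim C2)"
proof -
  have s: "M.subspace (C1 \<inter> VL L)" "M.subspace C2"
    using assms VL_subspace M.subspace_inter by (auto simp: lin_code_def)
  have "C1 \<inter> VL L \<inter> C2 = C2 \<inter> VL L" using assms(3) by blast
  then show ?thesis using M.dim_diff_formula[OF s] by (simp add: Dv_def mdim_def)
qed

lemma lin_sub: "lin_code C1 \<Longrightarrow> vec.subspace L \<Longrightarrow> M.subspace (C1 \<inter> VL L)"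
  using VL_subspace M.subspace_inter by (auto simp: lin_code_def)

lemma step_up:
  fixes C1 C2 :: "('a::field^'n^'m) set"
  assumes "lin_code C1" "lin_code C2" "C2 \<subseteq> C1" "vec.subspace L"
    and lt: "Dv C1 C2 L < int (mdim C1) - int (mdim C2)"
  shows "\<exists>L'. vec.subspace L' \<and> vec.dim L' \<le> vec.dim L + CARD('m) \<and> Dv C1 C2 L' \<ge> Dv C1 C2 L + 1"
proof -
  define A where "A = C1 \<inter> VL L"
  have DL: "Dv C1 C2 L = int (M.dim (A \<union> C2)) - int (M.dim C2)"
    using Dv_alt[OF assms(1-4)] A_def by simp
  have "\<not> C1 \<subseteq> M.span (A \<union> C2)"
  proof
    assume "C1 \<subseteq> M.span (A \<union> C2)"
    then have "M.dim C1 \<le> M.dim (A \<union> C2)" by (rule M.dim_mono)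
    then show False using lt DL by (simp add: mdim_def)
  qed
  then obtain C where C: "C \<in> C1" "C \<notin> M.span (A \<union> C2)" by blast
  define L' where "L' = vec.span (L \<union> range (($) C))"
  have sL': "vec.subspace L'" by (simp add: L'_def)
  have "vec.dim L' = vec.dim (L \<union> range (($) C))" by (simp add: L'_def)
  also have "\<dots> \<le> vec.dim L + card (range (($) C))" by (rule vec.dim_Un_card) simp
  also have "card (range (($) C)) \<le> CARD('m)" by (rule card_image_le) simp
  finally have dimL': "vec.dim L' \<le> vec.dim L + CARD('m)" by simp
  have LL': "L \<subseteq> L'" unfolding L'_def using vec.span_superset by blast
  have CVL: "C \<in> VL L'" using sL' by (simp add: VL_iff L'_def vec.span_base)
  define A' where "A' = C1 \<inter> VL L'"
  have "insert C (A \<union> C2) \<subseteq> A' \<union> C2"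
    using C CVL VL_mono[OF LL'] unfolding A_def A'_def by blast
  then have "M.dim (insert C (A \<union> C2)) \<le> M.dim (A' \<union> C2)" by (rule M.dim_subset)
  moreover have "M.dim (insert C (A \<union> C2)) = M.dim (A \<union> C2) + 1"
    using C(2) M.dim_insert[of C "A \<union> C2"] by presburger
  ultimately have "M.dim (A \<union> C2) + 1 \<le> M.dim (A' \<union> C2)" by linarith
  moreover have "Dv C1 C2 L' = int (M.dim (A' \<union> C2)) - int (M.dim C2)"
    using Dv_alt[OF assms(1-3) sL'] A'_def by simp
  ultimately have "Dv C1 C2 L' \<ge> Dv C1 C2 L + 1" using DL by linarith
  with sL' dimL' show ?thesis by blast
qed

definition Rv :: "'m \<Rightarrow> 'a::field^'n \<Rightarrow> 'a^'n^'m" where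
  "Rv i b = (\<chi> a. if a = i then b else 0)"

lemma step_down:
  fixes C1 C2 :: "('a::field^'n^'m) set"
  assumes "lin_code C1" "lin_code C2" "C2 \<subseteq> C1" "vec.subspace L" "vec.dim L \<ge> 1"
  shows "\<exists>L''. vec.subspace L'' \<and> vec.dim L'' + 1 = vec.dim L \<and> Dv C1 C2 L'' + int CARD('m) \<ge> Dv C1 C2 L"
proof -
  obtain B where B: "finite B" "B \<subseteq> L" "vec.independent B" "vec.span B = L" "card B = vec.dim L"
    using vec.basis_subspace_exists[OF assms(4)] by blast
  then obtain b where b: "b \<in> B" using assms(5) by fastforce
  define L'' where "L'' = vec.span (B - {b})"
  have sL'': "vec.subspace L''" by (simp add: L''_def)
  have "vec.dim L'' = card (B - {b})" unfolding L''_def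
    by (rule vec.dim_span_eq_card_independent) (rule vec.independent_mono[OF B(3)], blast)
  then have dimL'': "vec.dim L'' + 1 = vec.dim L" using B b assms(5)
    by (simp add: card_Diff_singleton)
  have L''L: "L'' \<subseteq> L" unfolding L''_def using B(4) vec.span_mono[of "B - {b}" B] by blast
  have BB: "insert b (B - {b}) = B" using b by blast
  define R where "R = range (\<lambda>i. Rv i b :: 'a^'n^'m)"
  have VLspan: "VL L \<subseteq> M.span (VL L'' \<union> R)"
  proof
    fix V :: "'a^'n^'m" assume "V \<in> VL L"
    then have "\<forall>i. V $ i \<in> L" using VL_iff[OF assms(4)] by blast
    then have "\<forall>i. V $ i \<in> vec.span (insert b (B - {b}))" using B(4) BB by simp
    then have "\<forall>i. \<exists>k. V $ i - k *s b \<in> L''" unfolding L''_def vec.span_breakdown_eq by blast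
    then have "\<exists>k. \<forall>i. V $ i - k i *s b \<in> L''" by (rule choice)
    then obtain k where k: "\<And>i. V $ i - k i *s b \<in> L''" by blast
    define W where "W = (\<chi> a. V $ a - k a *s b)"
    have W: "W \<in> VL L''" using sL'' k by (simp add: VL_iff W_def)
    have sumc: "(\<Sum>i\<in>UNIV. mscale (k i) (Rv i b)) $ a = k a *s b" for a
    proof -
      have "(\<Sum>i\<in>UNIV. mscale (k i) (Rv i b)) $ a = (\<Sum>i\<in>UNIV. (mscale (k i) (Rv i b)) $ a)"
        by (simp only: sum_component)
      also have "\<dots> = (\<Sum>i\<in>UNIV. if i = a then k a *s b else 0)"
        by (rule sum.cong[OF refl]) (auto simp: mscale_def Rv_def)
      also have "\<dots> = k a *s b" by simp
      finally show ?thesis .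
    qed
    have eq: "V = W + (\<Sum>i\<in>UNIV. mscale (k i) (Rv i b))"
      by (subst vec_eq_iff) (simp add: sumc[unfolded sum_component] W_def)
    show "V \<in> M.span (VL L'' \<union> R)"
      by (subst eq, intro M.span_add M.span_sum M.span_scale M.span_base) (auto simp: W R_def)
  qed
  have dVL: "M.dim (VL L :: ('a^'n^'m) set) \<le> M.dim (VL L'' :: ('a^'n^'m) set) + CARD('m)"
  proof -
    have "M.dim (VL L :: ('a^'n^'m) set) \<le> M.dim (VL L'' \<union> R)" using VLspan by (rule M.dim_mono)
    also have "\<dots> \<le> M.dim (VL L'' :: ('a^'n^'m) set) + card R" by (rule M.dim_Un_card) (simp add: R_def)
    also have "card R \<le> CARD('m)" unfolding R_def by (rule card_image_le) simp
    finally show ?thesis by simp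
  qed
  define A where "A = C1 \<inter> VL L"
  have sA: "M.subspace A" using lin_sub[OF assms(1,4)] A_def by simp
  have sV: "M.subspace (VL L'' :: ('a^'n^'m) set)" by (rule VL_subspace[OF sL''])
  have AI: "A \<inter> VL L'' = C1 \<inter> VL L''" using VL_mono[OF L''L] A_def by blast
  have "int (M.dim A) - int (M.dim (C1 \<inter> VL L'')) = int (M.dim (A \<union> VL L'')) - int (M.dim (VL L'' :: ('a^'n^'m) set))"
    using M.dim_diff_formula[OF sA sV] AI by simp
  moreover have "M.dim (A \<union> VL L'') \<le> M.dim (VL L :: ('a^'n^'m) set)"
    by (rule M.dim_subset) (use VL_mono[OF L''L] A_def in blast)
  moreover have "M.dim (C2 \<inter> VL L'') \<le> M.dim (C2 \<inter> VL L)"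
    by (rule M.dim_subset) (use VL_mono[OF L''L] in blast)
  ultimately have "Dv C1 C2 L'' + int CARD('m) \<ge> Dv C1 C2 L"
    using dVL unfolding Dv_def mdim_def A_def by linarith
  then show ?thesis using sL'' dimL'' by blast
qed

lemma dMr_le:
  "vec.subspace L \<Longrightarrow> int r \<le> Dv C1 C2 L \<Longrightarrow> dMr C1 C2 r \<le> vec.dim L"
  unfolding dMr_def Dv_def by (rule Least_le) blast

lemma dMr_ex:
  fixes C1 C2 :: "('a::field^'n^'m) set"
  assumes "lin_code C1" "lin_code C2" "C2 \<subseteq> C1" "r \<le> mdim C1 - mdim C2"
  shows "\<exists>L. vec.subspace L \<and> vec.dim L = dMr C1 C2 r \<and> int r \<le> Dv C1 C2 L"
    and "dMr C1 C2 r \<le> CARD('n)"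
proof -
  have "mdim C2 \<le> mdim C1" using assms(3) M.dim_subset by (simp add: mdim_def)
  then have U: "int r \<le> Dv C1 C2 UNIV" using assms(4) by (simp add: Dv_def VL_UNIV)
  have ex: "\<exists>d L. vec.subspace L \<and> vec.dim L = d \<and>
      int (mdim (C1 \<inter> VL L)) - int (mdim (C2 \<inter> VL L)) \<ge> int r"
    using U unfolding Dv_def by (intro exI[of _ "vec.dim UNIV"] exI[of _ UNIV]) simp
  show "\<exists>L. vec.subspace L \<and> vec.dim L = dMr C1 C2 r \<and> int r \<le> Dv C1 C2 L"
    using LeastI_ex[OF ex] unfolding dMr_def Dv_def by blast
  have "dMr C1 C2 r \<le> vec.dim (UNIV :: ('a^'n) set)" by (rule dMr_le[OF _ U]) simp
  then show "dMr C1 C2 r \<le> CARD('n)" by (simp add: card_cart_basis)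
qed


theorem proposition14:
  fixes C1 C2 :: "('a::field^'n^'m) set"
  assumes "lin_code C1" and "lin_code C2" and "C2 \<subset> C1"
  defines "l \<equiv> mdim C1 - mdim C2"
  shows "(\<forall>r. 1 \<le> r \<and> r + 1 \<le> l \<longrightarrow>
            0 \<le> int (dMr C1 C2 (r + 1)) - int (dMr C1 C2 r) \<and>
            int (dMr C1 C2 (r + 1)) - int (dMr C1 C2 r) \<le> int (min CARD('m) CARD('n)))
       \<and> (\<forall>r. 1 \<le> r \<and> r + CARD('m) \<le> l \<longrightarrow>
            dMr C1 C2 r + 1 \<le> dMr C1 C2 (r + CARD('m)))"
proof -
  have c: "C2 \<subseteq> C1" using assms(3) by blast
  note a = assms(1,2) c
  have ml: "mdim C2 \<le> mdim C1" using c M.dim_subset by (simp add: mdim_def)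
  have part1: "dMr C1 C2 r \<le> dMr C1 C2 (r + 1) \<and>
      dMr C1 C2 (r + 1) \<le> dMr C1 C2 r + min CARD('m) CARD('n)"
    if r: "1 \<le> r" "r + 1 \<le> l" for r
  proof -
    obtain L1 where L1: "vec.subspace L1" "vec.dim L1 = dMr C1 C2 (r+1)" "int (r+1) \<le> Dv C1 C2 L1"
      using dMr_ex(1)[OF a, of "r+1"] r l_def by auto
    have "dMr C1 C2 r \<le> vec.dim L1" by (rule dMr_le[OF L1(1)]) (use L1(3) in simp)
    then have mono: "dMr C1 C2 r \<le> dMr C1 C2 (r + 1)" using L1(2) by simp
    obtain L where L: "vec.subspace L" "vec.dim L = dMr C1 C2 r" "int r \<le> Dv C1 C2 L"
      using dMr_ex(1)[OF a, of r] r l_def by auto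
    have up: "dMr C1 C2 (r + 1) \<le> dMr C1 C2 r + CARD('m)"
    proof (cases "int (r+1) \<le> Dv C1 C2 L")
      case True
      then have "dMr C1 C2 (r + 1) \<le> vec.dim L" by (intro dMr_le[OF L(1)])
      then show ?thesis using L(2) by simp
    next
      case False
      then have "Dv C1 C2 L < int (mdim C1) - int (mdim C2)" using r ml l_def by linarith
      then obtain L' where L': "vec.subspace L'" "vec.dim L' \<le> vec.dim L + CARD('m)"
          "Dv C1 C2 L' \<ge> Dv C1 C2 L + 1"
        using step_up[OF a L(1)] by blast
      then have "dMr C1 C2 (r + 1) \<le> vec.dim L'" using L(3) by (intro dMr_le) auto
      then show ?thesis using L' L(2) by simp
    qed
    have "dMr C1 C2 (r + 1) \<le> CARD('n)" using dMr_ex(2)[OF a, of "r+1"] r l_def by auto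
    then show ?thesis using mono up by (simp add: min_def)
  qed
  have part2: "dMr C1 C2 r + 1 \<le> dMr C1 C2 (r + CARD('m))"
    if r: "1 \<le> r" "r + CARD('m) \<le> l" for r
  proof -
    obtain L where L: "vec.subspace L" "vec.dim L = dMr C1 C2 (r + CARD('m))"
        "int (r + CARD('m)) \<le> Dv C1 C2 L"
      using dMr_ex(1)[OF a, of "r + CARD('m)"] r l_def by auto
    have "vec.dim L \<ge> 1"
    proof (rule ccontr)
      assume "\<not> vec.dim L \<ge> 1"
      then have "vec.dim L = 0" by linarith
      then have "L \<subseteq> {0}" using vec.dim_eq_0 by blast
      have "VL L \<subseteq> ({0} :: ('a^'n^'m) set)"
      proof
        fix V :: "'a^'n^'m" assume "V \<in> VL L"
        then have "\<forall>i. V $ i \<in> L" using VL_iff[OF L(1)] by blast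
        then have "\<forall>i. V $ i = 0" using \<open>L \<subseteq> {0}\<close> by blast
        then show "V \<in> {0}" by (metis singletonI vec_eq_iff zero_index)
      qed
      then have "C1 \<inter> VL L \<subseteq> {0}" by blast
      then have "M.dim (C1 \<inter> VL L) = 0" using M.dim_eq_0 by blast
      then have "Dv C1 C2 L \<le> 0" unfolding Dv_def mdim_def by linarith
      then show False using L(3) r(1) by simp
    qed
    then obtain L'' where L'': "vec.subspace L''" "vec.dim L'' + 1 = vec.dim L"
        "Dv C1 C2 L'' + int CARD('m) \<ge> Dv C1 C2 L"
      using step_down[OF a L(1)] by blast
    have "dMr C1 C2 r \<le> vec.dim L''" using L(3) L''(3) by (intro dMr_le[OF L''(1)]) simp
    then show ?thesis using L'' L(2) by simp
  qed
  show ?thesis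
  proof (intro conjI allI impI)
    fix r assume "1 \<le> r \<and> r + 1 \<le> l"
    then have "dMr C1 C2 r \<le> dMr C1 C2 (r + 1) \<and>
      dMr C1 C2 (r + 1) \<le> dMr C1 C2 r + min CARD('m) CARD('n)" using part1 by blast
    then show "0 \<le> int (dMr C1 C2 (r + 1)) - int (dMr C1 C2 r)"
      and "int (dMr C1 C2 (r + 1)) - int (dMr C1 C2 r) \<le> int (min CARD('m) CARD('n))"
      by linarith+
  next
    fix r assume "1 \<le> r \<and> r + CARD('m) \<le> l"
    then show "dMr C1 C2 r + 1 \<le> dMr C1 C2 (r + CARD('m))" using part2 by blast
  qed
qed

end
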